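(* Let $q$ be a prime power, let $\mathbf{C}\subseteq\mathbf{F}_q^n$ be a projective linear $[n,k]_q$ code with maximum weight $w\le n$, and let $h$ be a positive integer. Then the simplex complementary code of $\mathbf{C}$ of dimension $k+h$ has parameters $[\frac{q^{k+h}-1}{q-1}-n,\ k+h,\ q^{k+h-1}-w]_q$ and maximum weight $q^{k+h-1}$. When $h>\log_q w-k+2$, this simplex complementary code is a minimal code satisfying the Ashikhmin–Barg condition.
   Context: A linear $[n,k]_q$ code is projective if the columns $\mathbf{g}_1,\dots,\mathbf{g}_n$ of a generator matrix are nonzero and pairwise linearly independent. Simplex complementary code: set $K=k+h$ and regard $\mathbf{g}_1,\dots,\mathbf{g}_n$ as vectors of $\mathbf{F}_q^K$ by appending $h$ zero coordinates. Choose a set $P$ of representatives of all $\frac{q^K-1}{q-1}$ one-dimensional subspaces of $\mathbf{F}_q^K$ containing $\mathbf{g}_1,\dots,\mathbf{g}_n$. The simplex complementary code of $\mathbf{C}$ is the linear code generated by the $K\times(\frac{q^K-1}{q-1}-n)$ matrix whose columns are the elements of $P\setminus\{\mathbf{g}_1,\dots,\mathbf{g}_n\}$. A linear code is minimal if for all nonzero codewords $\mathbf{c},\mathbf{c}'$ with $supp(\mathbf{c}')\subseteq supp(\mathbf{c})$ there is $\lambda\in\mathbf{F}_q^*$ with $\mathbf{c}'=\lambda\mathbf{c}$. With $w_{min},w_{max}$ the minimum and maximum weights of nonzero codewords, the Ashikhmin–Barg condition is $w_{min}/w_{max}>(q-1)/q$. The notation $[n,k,d]_q$ means length $n$, dimension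 $k$, minimum distance $d$. *)

theory Defs
  imports "HOL-Analysis.Analysis" "HOL-Library.Function_Algebras"
begin

text \<open>Vectors of F_q^K are functions nat => 'a vanishing at indices >= K.\<close>
definition vecs :: "nat \<Rightarrow> (nat \<Rightarrow> 'a::zero) set" where
  "vecs K = {v. \<forall>i\<ge>K. v i = 0}"

definition dotp :: "nat \<Rightarrow> (nat \<Rightarrow> 'a::comm_semiring_0) \<Rightarrow> (nat \<Rightarrow> 'a) \<Rightarrow> 'a" where
  "dotp K u v = (\<Sum>i<K. u i * v i)"

text \<open>The linear code generated by the K x |J| matrix whose columns are col j (j in J):
  codewords are indexed by J (zero outside J).\<close>
definition gen_code :: "nat \<Rightarrow> 'j set \<Rightarrow> ('j \<Rightarrow> (nat \<Rightarrow> 'a::field)) \<Rightarrow> ('j \<Rightarrow> 'a) set" where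
  "gen_code K J col = {(\<lambda>j. if j \<in> J then dotp K u (col j) else 0) | u. u \<in> vecs K}"

definition code_dim :: "('j \<Rightarrow> 'a::field) set \<Rightarrow> nat" where
  "code_dim C = vector_space.dim (\<lambda>(c::'a) (f::'j \<Rightarrow> 'a). (\<lambda>j. c * f j)) C"

definition supp :: "('j \<Rightarrow> 'a::zero) \<Rightarrow> 'j set" where
  "supp c = {j. c j \<noteq> 0}"

definition wt :: "('j \<Rightarrow> 'a::zero) \<Rightarrow> nat" where
  "wt c = card (supp c)"

definition min_weight :: "('j \<Rightarrow> 'a::zero) set \<Rightarrow> nat" where
  "min_weight C = Min {wt c | c. c \<in> C \<and> c \<noteq> 0}"

definition max_weight :: "('j \<Rightarrow> 'a::zero) set \<Rightarrow> nat" where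
  "max_weight C = Max {wt c | c. c \<in> C \<and> c \<noteq> 0}"

definition projective :: "nat \<Rightarrow> (nat \<Rightarrow> (nat \<Rightarrow> 'a::field)) \<Rightarrow> bool" where
  "projective n g \<longleftrightarrow> (\<forall>i<n. g i \<noteq> 0) \<and>
     (\<forall>i<n. \<forall>j<n. i \<noteq> j \<longrightarrow> \<not> (\<exists>c. g i = (\<lambda>l. c * g j l)))"

definition proj_reps :: "nat \<Rightarrow> (nat \<Rightarrow> 'a::field) set \<Rightarrow> bool" where
  "proj_reps K P \<longleftrightarrow> P \<subseteq> vecs K \<and> 0 \<notin> P \<and>
     (\<forall>v\<in>vecs K. v \<noteq> 0 \<longrightarrow> (\<exists>!p. p \<in> P \<and> (\<exists>c. v = (\<lambda>l. c * p l))))"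

definition minimal_code :: "('j \<Rightarrow> 'a::field) set \<Rightarrow> bool" where
  "minimal_code C \<longleftrightarrow> (\<forall>c\<in>C. \<forall>c'\<in>C. c \<noteq> 0 \<longrightarrow> c' \<noteq> 0 \<longrightarrow> supp c' \<subseteq> supp c \<longrightarrow>
     (\<exists>a. a \<noteq> 0 \<and> c' = (\<lambda>j. a * c j)))"

end

theory Submission
  imports Defs
begin

lemma VS: "vector_space (\<lambda>(c::'a::field) (f::'j \<Rightarrow> 'a). \<lambda>j. c * f j)"
  unfolding vector_space_def by (auto simp: algebra_simps)

definition E :: "nat \<Rightarrow> nat \<Rightarrow> 'a::zero_neq_one" where
  "E i = (\<lambda>l. if l = i then 1 else 0)"

lemma finite_vecs_card: "finite (vecs m :: (nat \<Rightarrow> 'a::{finite,zero}) set) \<and> card (vecs m :: (nat \<Rightarrow> 'a) set) = CARD('a) ^ m"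
proof (induction m)
  case 0
  have "vecs 0 = {(\<lambda>_. 0) :: nat \<Rightarrow> 'a}" by (auto simp: vecs_def)
  then show ?case by simp
next
  case (Suc m)
  let ?f = "\<lambda>(v::nat \<Rightarrow> 'a, a::'a). v(m := a)"
  have eq: "vecs (Suc m) = ?f ` (vecs m \<times> UNIV)"
  proof (rule set_eqI, rule iffI)
    fix v :: "nat \<Rightarrow> 'a" assume "v \<in> vecs (Suc m)"
    then have "v(m := 0) \<in> vecs m" "v = ?f (v(m:=0), v m)" by (auto simp: vecs_def)
    then show "v \<in> ?f ` (vecs m \<times> UNIV)" by blast
  next
    fix v :: "nat \<Rightarrow> 'a" assume "v \<in> ?f ` (vecs m \<times> UNIV)"
    then show "v \<in> vecs (Suc m)" by (auto simp: vecs_def)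
  qed
  have inj: "inj_on ?f (vecs m \<times> UNIV)"
  proof (rule inj_onI)
    fix x y assume x: "x \<in> vecs m \<times> (UNIV::'a set)" and y: "y \<in> vecs m \<times> (UNIV::'a set)" and e: "?f x = ?f y"
    obtain v a where xv: "x = (v, a)" by (cases x)
    obtain v' a' where yv: "y = (v', a')" by (cases y)
    have vm: "v m = 0" "v' m = 0" using x y xv yv by (auto simp: vecs_def)
    have e2: "v(m := a) = v'(m := a')" using e xv yv by simp
    have "a = a'" using fun_cong[OF e2, of m] by simp
    moreover have "v = v'"
    proof
      fix l show "v l = v' l" using fun_cong[OF e2, of l] vm by (cases "l = m") auto
    qed
    ultimately show "x = y" using xv yv by simp
  qed
  show ?case using Suc eq card_image[OF inj] by (simp add: card_cartesian_product)
qed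

lemma finite_vecs: "finite (vecs m :: (nat \<Rightarrow> 'a::{finite,zero}) set)"
  using finite_vecs_card by blast
lemma card_vecs: "card (vecs m :: (nat \<Rightarrow> 'a::{finite,zero}) set) = CARD('a) ^ m"
  using finite_vecs_card by blast

lemma dotp_add_E:
  assumes "i < m"
  shows "dotp m u (\<lambda>l. v l + d * E i l) = dotp m u v + d * (u i :: 'a::field)"
proof -
  have "dotp m u (\<lambda>l. v l + d * E i l) = dotp m u v + (\<Sum>l<m. u l * (d * E i l))"
    unfolding dotp_def by (simp add: algebra_simps sum.distrib)
  also have "(\<Sum>l<m. u l * (d * E i l)) = (\<Sum>l<m. if l = i then u i * d else 0)"
    by (rule sum.cong) (auto simp: E_def)
  also have "\<dots> = u i * d" using assms by simp
  finally show ?thesis by (simp add: mult.commute)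
qed

lemma E_vecs: "i < m \<Longrightarrow> E i \<in> vecs m"
  by (auto simp: E_def vecs_def)

lemma card_fiber0:
  fixes u :: "nat \<Rightarrow> 'a::{finite,field}"
  assumes u: "u \<in> vecs m" and i: "i < m" "u i \<noteq> 0"
  shows "card {v \<in> vecs m. dotp m u v = 0} = CARD('a) ^ (m - 1)"
proof -
  define F where "F c = {v \<in> vecs m. dotp m u v = c}" for c
  have fin: "finite (F c)" for c unfolding F_def using finite_vecs[where 'a='a] by auto
  have same: "card (F c) = card (F 0)" for c
  proof -
    let ?t = "\<lambda>v. \<lambda>l. v l + (c / u i) * E i l"
    have "F c = ?t ` F 0"
    proof (rule set_eqI, rule iffI)
      fix v assume v: "v \<in> F c"
      let ?w = "\<lambda>l. v l + (- c / u i) * E i l"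
      have d: "dotp m u ?w = dotp m u v + (- c / u i) * u i" by (rule dotp_add_E[OF i(1)])
      have w0: "?w \<in> F 0" using v i E_vecs[OF i(1)] d unfolding F_def
        by (auto simp: vecs_def)
      show "v \<in> ?t ` F 0"
        apply (rule image_eqI[of v ?t ?w "F 0"])
        using w0 by (auto simp: algebra_simps)
    next
      fix v assume "v \<in> ?t ` F 0"
      then obtain x where x: "x \<in> F 0" "v = ?t x" by blast
      have d: "dotp m u (?t x) = dotp m u x + (c / u i) * u i" by (rule dotp_add_E[OF i(1)])
      show "v \<in> F c" using i E_vecs[OF i(1)] x d unfolding F_def
        by (auto simp: vecs_def)
    qed
    moreover have "inj_on ?t (F 0)"
      by (rule inj_onI) (simp add: fun_eq_iff)
    ultimately show ?thesis by (simp add: card_image)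
  qed
  have "vecs m = (\<Union>c\<in>UNIV. F c)" unfolding F_def by auto
  moreover have "card (\<Union>c\<in>UNIV. F c) = (\<Sum>c\<in>UNIV. card (F c))"
    apply (rule card_UN_disjoint)
    apply (simp_all add: fin)
    apply (auto simp: F_def)
    done
  ultimately have "card (vecs m :: (nat \<Rightarrow> 'a) set) = (\<Sum>c\<in>UNIV. card (F c))"
    by simp
  also have "\<dots> = (\<Sum>c\<in>(UNIV::'a set). card (F 0))" using same by (intro sum.cong) auto
  also have "\<dots> = CARD('a) * card (F 0)" by simp
  finally have "CARD('a) ^ m = CARD('a) * card (F 0)" by (simp add: card_vecs)
  moreover have "CARD('a) ^ m = CARD('a) * CARD('a) ^ (m - 1)" using i
    by (metis Suc_pred' gr_implies_not0 not_gr_zero power_Suc)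
  ultimately show ?thesis unfolding F_def by simp
qed

lemma card_nonorth:
  fixes u :: "nat \<Rightarrow> 'a::{finite,field}"
  assumes u: "u \<in> vecs m" and i: "i < m" "u i \<noteq> 0"
  shows "card {v \<in> vecs m. dotp m u v \<noteq> 0} = CARD('a) ^ m - CARD('a) ^ (m - 1)"
proof -
  have "{v \<in> vecs m. dotp m u v \<noteq> 0} = vecs m - {v \<in> vecs m. dotp m u v = 0}" by auto
  then show ?thesis using card_fiber0[OF assms] finite_vecs[where 'a='a]
    by (simp add: card_Diff_subset card_vecs)
qed

lemma scale_count:
  fixes P A :: "(nat \<Rightarrow> 'a::{finite,field}) set"
  assumes P: "proj_reps K P" and A: "A \<subseteq> vecs K" "0 \<notin> A"
    and cl: "\<forall>v\<in>A. \<forall>c. c \<noteq> 0 \<longrightarrow> (\<lambda>l. c * v l) \<in> A"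
  shows "card A = (CARD('a) - 1) * card (P \<inter> A)"
proof -
  let ?f = "\<lambda>(c::'a, p::nat \<Rightarrow> 'a). \<lambda>l. c * p l"
  have PV: "P \<subseteq> vecs K" "0 \<notin> P"
    and uniq: "\<And>v. v \<in> vecs K \<Longrightarrow> v \<noteq> 0 \<Longrightarrow> \<exists>!p. p \<in> P \<and> (\<exists>c. v = (\<lambda>l. c * p l))"
    using P unfolding proj_reps_def by auto
  have eq: "A = ?f ` ((UNIV - {0}) \<times> (P \<inter> A))"
  proof (rule set_eqI, rule iffI)
    fix v assume vA: "v \<in> A"
    then have "v \<in> vecs K" "v \<noteq> 0" using A by auto
    then obtain p c where p: "p \<in> P" "v = (\<lambda>l. c * p l)" using uniq by blast
    have c0: "c \<noteq> 0" using p \<open>v \<noteq> 0\<close> by auto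
    have "p = (\<lambda>l. inverse c * v l)" using p c0 by (auto simp: field_simps)
    then have "p \<in> A" using cl vA c0 by simp
    then show "v \<in> ?f ` ((UNIV - {0}) \<times> (P \<inter> A))" using p c0 by force
  next
    fix v assume "v \<in> ?f ` ((UNIV - {0}) \<times> (P \<inter> A))"
    then show "v \<in> A" using cl by auto
  qed
  have inj: "inj_on ?f ((UNIV - {0}) \<times> (P \<inter> A))"
  proof (rule inj_onI)
    fix x y assume x: "x \<in> (UNIV - {0}) \<times> (P \<inter> A)" and y: "y \<in> (UNIV - {0}) \<times> (P \<inter> A)"
      and e: "?f x = ?f y"
    obtain c p where xv: "x = (c, p)" by (cases x)
    obtain c' p' where yv: "y = (c', p')" by (cases y)
    have h: "c \<noteq> 0" "c' \<noteq> 0" "p \<in> P" "p' \<in> P" using x y xv yv by auto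
    let ?v = "\<lambda>l. c * p l"
    have vK: "?v \<in> vecs K" using PV h by (auto simp: vecs_def)
    have v0: "?v \<noteq> 0"
    proof
      assume "?v = 0"
      then have "p = 0" using h by (auto simp: fun_eq_iff)
      then show False using h PV by auto
    qed
    have e2: "?v = (\<lambda>l. c' * p' l)" using e xv yv by simp
    have pp: "p = p'" using uniq[OF vK v0] h e2 by blast
    have "p \<noteq> 0" using h PV by auto
    then obtain l where l: "p l \<noteq> 0" by (auto simp: fun_eq_iff)
    have "c * p l = c' * p l" using fun_cong[OF e2, of l] pp by simp
    then have "c = c'" using l by simp
    then show "x = y" using xv yv pp by simp
  qed
  have "card A = card ((UNIV - {0::'a}) \<times> (P \<inter> A))" using eq card_image[OF inj] by simp
  also have "\<dots> = (CARD('a) - 1) * card (P \<inter> A)"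
    by (simp add: card_cartesian_product card_Diff_subset)
  finally show ?thesis .
qed

lemma fun_sum_apply: "sum f A x = (\<Sum>a\<in>A. (f a x :: 'b::comm_monoid_add))"
  by (induction A rule: infinite_finite_induct) auto

lemma dotp_E: assumes "i < K" shows "dotp K (E i) v = (v i :: 'a::field)"
proof -
  have "dotp K (E i) v = (\<Sum>l<K. if l = i then v l else 0)"
    unfolding dotp_def E_def by (rule sum.cong) auto
  then show ?thesis using assms by simp
qed

lemma gen_dim:
  fixes col :: "'j \<Rightarrow> (nat \<Rightarrow> 'a::field)"
  assumes injL: "\<forall>u\<in>vecs K. u \<noteq> 0 \<longrightarrow> (\<lambda>j. if j \<in> J then dotp K u (col j) else 0) \<noteq> 0"
  shows "code_dim (gen_code K J col) = K"
proof -
  interpret V: vector_space "\<lambda>(c::'a) (f::'j\<Rightarrow>'a). \<lambda>j. c * f j" by (rule VS)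
  define L where "L u = (\<lambda>j. if j \<in> J then dotp K u (col j) else 0)" for u
  have Lexp: "L u j = (if j \<in> J then (\<Sum>i<K. u i * col j i) else 0)" for u j
    by (simp add: L_def dotp_def)
  have LE: "L (E i) j = (if j \<in> J then col j i else 0)" if "i < K" for i j
    using that by (simp add: L_def dotp_E)
  have Lsum: "L u = (\<Sum>i<K. (\<lambda>j. u i * L (E i) j))" for u
  proof (rule ext)
    fix j
    have "(\<Sum>i<K. (\<lambda>j. u i * L (E i) j)) j = (\<Sum>i<K. u i * L (E i) j)" by (rule fun_sum_apply)
    also have "\<dots> = (\<Sum>i<K. u i * (if j \<in> J then col j i else 0))"
      by (rule sum.cong) (auto simp: LE)
    also have "\<dots> = L u j" by (cases "j \<in> J") (auto simp: Lexp)
    finally show "L u j = (\<Sum>i<K. (\<lambda>j. u i * L (E i) j)) j" by simp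
  qed
  have Ldiff: "L (\<lambda>l. u l - v l) = (\<lambda>j. L u j - L v j)" for u v
    by (rule ext) (simp add: Lexp algebra_simps sum_subtractf)
  define B where "B = (\<lambda>i. L (E i)) ` {..<K}"
  have code: "gen_code K J col = L ` vecs K" unfolding gen_code_def L_def by auto
  have injE: "inj_on (\<lambda>i. L (E i)) {..<K}"
  proof (rule inj_onI, rule ccontr)
    fix i i' assume ii: "i \<in> {..<K}" "i' \<in> {..<K}" "L (E i) = L (E i')" "i \<noteq> i'"
    let ?u = "\<lambda>l. E i l - E i' l :: 'a"
    have uK: "?u \<in> vecs K" using ii by (auto simp: vecs_def E_def)
    have "?u i \<noteq> 0" using ii by (simp add: E_def)
    then have u0: "?u \<noteq> 0" by (metis zero_fun_def)
    have "L ?u = 0" using ii by (simp add: Ldiff fun_eq_iff)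
    then show False using injL uK u0 unfolding L_def by auto
  qed
  have "V.dim (L ` vecs K) = K"
  proof (rule V.dim_unique[of B])
    show "B \<subseteq> L ` vecs K" unfolding B_def using E_vecs by blast
    show "L ` vecs K \<subseteq> V.span B"
    proof
      fix x assume "x \<in> L ` vecs K"
      then obtain u where x: "x = L u" by blast
      have "(\<Sum>i<K. (\<lambda>j. u i * L (E i) j)) \<in> V.span B"
      proof (rule V.span_sum)
        fix i assume "i \<in> {..<K}"
        then have "L (E i) \<in> B" by (simp add: B_def)
        from V.span_scale[OF V.span_base[OF this], of "u i"]
        show "(\<lambda>j. u i * L (E i) j) \<in> V.span B" by simp
      qed
      then show "x \<in> V.span B" unfolding x Lsum[of u] .
    qed
    show "card B = K" unfolding B_def using card_image[OF injE] by simp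
    show "V.independent B"
    proof
      assume "V.dependent B"
      then obtain a where a: "\<exists>v\<in>B. a v \<noteq> 0" "(\<Sum>v\<in>B. (\<lambda>j. a v * v j)) = 0"
      proof -
        have "finite B" unfolding B_def by simp
        from \<open>V.dependent B\<close>[unfolded V.dependent_finite[OF this]] show ?thesis using that by blast
      qed
      define c where "c i = (if i < K then a (L (E i)) else 0)" for i
      have cK: "c \<in> vecs K" by (simp add: c_def vecs_def)
      obtain i0 where i0: "i0 < K" "a (L (E i0)) \<noteq> 0" using a(1) unfolding B_def by auto
      have c0: "c \<noteq> 0" using i0 by (auto simp: c_def fun_eq_iff)
      have "L c = (\<Sum>i<K. (\<lambda>j. c i * L (E i) j))" by (rule Lsum)
      also have "\<dots> = (\<Sum>i<K. (\<lambda>j. a (L (E i)) * L (E i) j))"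
        by (rule sum.cong) (auto simp: c_def)
      also have "\<dots> = (\<Sum>v\<in>B. (\<lambda>j. a v * v j))"
        unfolding B_def by (rule sum.reindex[OF injE, symmetric, unfolded comp_def])
      also have "\<dots> = 0" by (rule a(2))
      finally show False using injL cK c0 unfolding L_def by auto
    qed
  qed
  then show ?thesis unfolding code_dim_def code .
qed

lemma minimal_from_bounds:
  fixes S :: "('j \<Rightarrow> 'a::{finite,field}) set" and J :: "'j set"
  assumes finJ: "finite J" and supJ: "\<forall>c\<in>S. \<forall>j. j \<notin> J \<longrightarrow> c j = 0"
    and cl: "\<forall>c\<in>S. \<forall>c'\<in>S. \<forall>a. (\<lambda>j. c j - a * c' j) \<in> S"
    and bnd: "\<forall>c\<in>S. c \<noteq> 0 \<longrightarrow> m \<le> wt c \<and> wt c \<le> M"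
    and ineq: "(CARD('a) - 1) * M < CARD('a) * m"
  shows "minimal_code S"
  unfolding minimal_code_def
proof (intro ballI impI)
  fix c c' assume cS: "c \<in> S" and c'S: "c' \<in> S" and c0: "c \<noteq> 0" and c'0: "c' \<noteq> 0"
    and sub: "supp c' \<subseteq> supp c"
  show "\<exists>a. a \<noteq> 0 \<and> c' = (\<lambda>j. a * c j)"
  proof (rule ccontr)
    assume nex: "\<not> ?thesis"
    define F where "F = (UNIV - {0::'a})"
    define d where "d a = (\<lambda>j. c j - a * c' j)" for a
    define EA where "EA a = {j \<in> supp c'. c j = a * c' j}" for a
    have finc: "finite (supp c)" using supJ cS finJ
      by (auto simp: supp_def intro: finite_subset[of _ J])
    have dS: "d a \<in> S" for a using cl cS c'S by (simp add: d_def)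
    have d0: "d a \<noteq> 0" if "a \<in> F" for a
    proof
      assume "d a = 0"
      then have "c j = a * c' j" for j by (metis d_def eq_iff_diff_eq_0 zero_fun_def)
      then have "c' = (\<lambda>j. inverse a * c j)" using that by (auto simp: F_def fun_eq_iff)
      moreover have "inverse a \<noteq> 0" using that by (simp add: F_def)
      ultimately show False using nex by blast
    qed
    have EAsub: "EA a \<subseteq> supp c" for a using sub by (auto simp: EA_def)
    have suppd: "supp (d a) = supp c - EA a" for a
    proof (rule set_eqI)
      fix j
      show "j \<in> supp (d a) \<longleftrightarrow> j \<in> supp c - EA a"
        using sub by (auto simp: supp_def d_def EA_def)
    qed
    have wtd: "wt (d a) + card (EA a) = wt c" for a
      unfolding wt_def suppd using EAsub[of a] finc
      by (simp add: card_Diff_subset finite_subset[OF EAsub] card_mono)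
    have U: "supp c' = (\<Union>a\<in>F. EA a)"
    proof (rule set_eqI, rule iffI)
      fix j assume j: "j \<in> supp c'"
      then have "c j \<noteq> 0" "c' j \<noteq> 0" using sub by (auto simp: supp_def)
      then have "c j / c' j \<in> F" "j \<in> EA (c j / c' j)" using j by (auto simp: F_def EA_def)
      then show "j \<in> (\<Union>a\<in>F. EA a)" by blast
    qed (auto simp: EA_def)
    have "card (\<Union>a\<in>F. EA a) = (\<Sum>a\<in>F. card (EA a))"
    proof (rule card_UN_disjoint)
      show "finite F" by simp
      show "\<forall>a\<in>F. finite (EA a)" using finite_subset[OF EAsub finc] by blast
      show "\<forall>a\<in>F. \<forall>b\<in>F. a \<noteq> b \<longrightarrow> EA a \<inter> EA b = {}"
        by (auto simp: EA_def supp_def)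
    qed
    then have wc': "wt c' = (\<Sum>a\<in>F. card (EA a))" using U by (simp add: wt_def)
    have "(\<Sum>a\<in>F. wt (d a)) + wt c' = (\<Sum>a\<in>F. wt (d a) + card (EA a))"
      by (simp add: wc' sum.distrib)
    also have "\<dots> = card F * wt c" using wtd by simp
    finally have eq: "(\<Sum>a\<in>F. wt (d a)) + wt c' = card F * wt c" .
    have cF: "card F = CARD('a) - 1" by (simp add: F_def card_Diff_subset)
    have lb: "(CARD('a) - 1) * m \<le> (\<Sum>a\<in>F. wt (d a))"
      using sum_bounded_below[of F m "\<lambda>a. wt (d a)"] bnd dS d0 cF by auto
    have m1: "m \<le> wt c'" "wt c \<le> M" using bnd cS c'S c0 c'0 by auto
    have e2: "(\<Sum>a\<in>F. wt (d a)) + wt c' = (CARD('a) - 1) * wt c" using eq cF by simp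
    have "(CARD('a) - 1) * wt c \<le> (CARD('a) - 1) * M" using m1 by simp
    then have "(CARD('a) - 1) * m + m \<le> (CARD('a) - 1) * M"
      using lb m1 e2 by linarith
    moreover have "(CARD('a) - 1) * m + m = CARD('a) * m"
      by (metis Suc_pred' add.commute mult_Suc zero_less_card_finite finite)
    ultimately show False using ineq by linarith
  qed
qed

lemma zero_in_vecs: "(0 :: nat \<Rightarrow> 'a::zero) \<in> vecs m"
  by (simp add: vecs_def)

lemma dotp_scale: "dotp m u (\<lambda>l. c * v l) = c * dotp m u (v :: nat \<Rightarrow> 'a::field)"
  unfolding dotp_def by (simp add: sum_distrib_left algebra_simps)

lemma dotp_zero: "dotp m u (0 :: nat \<Rightarrow> 'a::field) = 0"
  unfolding dotp_def by simp

lemma dotp_zero1: "dotp m 0 (v :: nat \<Rightarrow> 'a::field) = 0"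
  unfolding dotp_def by simp

lemma vecs_mono: "m \<le> K \<Longrightarrow> vecs m \<subseteq> vecs K"
  by (auto simp: vecs_def)

lemma dotp_vecs_le:
  assumes "v \<in> vecs k" "k \<le> K"
  shows "dotp K u v = dotp k u (v :: nat \<Rightarrow> 'a::field)"
  unfolding dotp_def
  by (rule sum.mono_neutral_right) (use assms in \<open>auto simp: vecs_def\<close>)

lemma card_ge2: "2 \<le> CARD('a::{finite,field})"
proof -
  have "{0, 1::'a} \<subseteq> UNIV" by simp
  then have "card {0, 1::'a} \<le> CARD('a)" by (rule card_mono[OF finite])
  then show ?thesis by simp
qed

lemma hyp_count:
  fixes P :: "(nat \<Rightarrow> 'a::{finite,field}) set"
  assumes P: "proj_reps K P" and u: "u \<in> vecs m" "u \<noteq> 0" and mK: "m \<le> K"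
  shows "card (P \<inter> {v \<in> vecs m. dotp m u v \<noteq> 0}) = CARD('a) ^ (m - 1)"
proof -
  obtain i where i: "u i \<noteq> 0" using u by (auto simp: fun_eq_iff)
  then have im: "i < m" using u by (auto simp: vecs_def not_less[symmetric])
  let ?A = "{v \<in> vecs m. dotp m u v \<noteq> 0}"
  have "card ?A = (CARD('a) - 1) * card (P \<inter> ?A)"
    by (rule scale_count[OF P]) (use vecs_mono[OF mK] in \<open>auto simp: dotp_scale dotp_zero vecs_def\<close>)
  moreover have "card ?A = CARD('a) ^ m - CARD('a) ^ (m - 1)" by (rule card_nonorth[OF u(1) im i])
  moreover have "CARD('a) ^ m - CARD('a) ^ (m - 1) = (CARD('a) - 1) * CARD('a) ^ (m - 1)"
  proof -
    have "CARD('a) ^ m = CARD('a) * CARD('a) ^ (m - 1)" using im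
      by (metis Suc_pred' gr_implies_not0 not_gr_zero power_Suc)
    then show ?thesis by (simp add: diff_mult_distrib)
  qed
  moreover have "CARD('a) - 1 > 0" using card_ge2[where 'a='a] by simp
  ultimately show ?thesis by simp
qed

theorem theorem3p1:
  fixes g :: "nat \<Rightarrow> (nat \<Rightarrow> 'a::{finite,field})"
    and n k h w :: nat
    and P :: "(nat \<Rightarrow> 'a) set"
  assumes k_pos: "0 < k"
    and cols: "\<forall>i<n. g i \<in> vecs k"
    and proj: "projective n g"
    and dimC: "code_dim (gen_code k {..<n} g) = k"
    and w_def: "w = max_weight (gen_code k {..<n} g)"
    and h_pos: "0 < h"
    and P_reps: "proj_reps (k + h) P"
    and g_in_P: "\<forall>i<n. g i \<in> P"
  shows "card (P - g ` {..<n}) = (CARD('a) ^ (k + h) - 1) div (CARD('a) - 1) - n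
       \<and> code_dim (gen_code (k + h) (P - g ` {..<n}) id) = k + h
       \<and> min_weight (gen_code (k + h) (P - g ` {..<n}) id) = CARD('a) ^ (k + h - 1) - w
       \<and> max_weight (gen_code (k + h) (P - g ` {..<n}) id) = CARD('a) ^ (k + h - 1)
       \<and> (real h > log (real CARD('a)) (real w) - real k + 2 \<longrightarrow>
            minimal_code (gen_code (k + h) (P - g ` {..<n}) id)
            \<and> real (min_weight (gen_code (k + h) (P - g ` {..<n}) id))
                / real (max_weight (gen_code (k + h) (P - g ` {..<n}) id))
              > (real CARD('a) - 1) / real CARD('a))"
proof -
  define q where "q = CARD('a)"
  define K where "K = k + h"
  define G where "G = g ` {..<n}"
  have q2: "2 \<le> q" unfolding q_def by (rule card_ge2)
  have kK: "k < K" using h_pos by (simp add: K_def)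
  have PV: "P \<subseteq> vecs K" "0 \<notin> P" using P_reps by (auto simp: proj_reps_def K_def)
  have finP: "finite P" using finite_subset[OF PV(1) finite_vecs] .
  have ginj: "inj_on g {..<n}"
  proof (rule inj_onI, rule ccontr)
    fix i j assume ij: "i \<in> {..<n}" "j \<in> {..<n}" "g i = g j" "i \<noteq> j"
    then have e: "g i = (\<lambda>l. 1 * g j l)" by simp
    have "\<not> (\<exists>c. g i = (\<lambda>l. c * g j l))" using proj ij(1,2,4) unfolding projective_def by simp
    then show False using e by blast
  qed
  have GP: "G \<subseteq> P" using g_in_P by (auto simp: G_def)
  have cardG: "card G = n" unfolding G_def using card_image[OF ginj] by simp
  have "card (vecs K - {0} :: (nat \<Rightarrow> 'a) set) = (q - 1) * card (P \<inter> (vecs K - {0}))"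
    unfolding q_def by (rule scale_count) (use P_reps in \<open>auto simp: K_def vecs_def fun_eq_iff\<close>)
  moreover have "P \<inter> (vecs K - {0}) = P" using PV by auto
  moreover have "card (vecs K - {0} :: (nat \<Rightarrow> 'a) set) = q ^ K - 1"
    unfolding card_Diff_singleton[OF zero_in_vecs] card_vecs q_def ..
  ultimately have cP: "q ^ K - 1 = (q - 1) * card P" by simp
  have cardP: "card P = (q ^ K - 1) div (q - 1)" using cP q2 by simp
  have part1: "card (P - G) = (q ^ K - 1) div (q - 1) - n"
    using GP finP cardG cardP by (simp add: card_Diff_subset finite_subset)
  define cnt where "cnt u = card {i \<in> {..<n}. dotp k u (g i) \<noteq> 0}" for u :: "nat \<Rightarrow> 'a"
  define restr where "restr u = (\<lambda>i. if i < k then u i else (0::'a))" for u :: "nat \<Rightarrow> 'a"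
  have restr_vecs: "restr u \<in> vecs k" for u by (simp add: restr_def vecs_def)
  have dotp_restr: "dotp k (restr u) v = dotp k u v" for u v
    unfolding dotp_def restr_def by (rule sum.cong) auto
  have cnt_restr: "cnt (restr u) = cnt u" for u by (simp add: cnt_def dotp_restr)
  have cnt_le: "cnt u \<le> q ^ (k - 1)" for u
  proof (cases "restr u = 0")
    case True
    have "dotp k u v = 0" for v using dotp_restr[of u v] True by (simp add: dotp_zero1)
    then have "{i \<in> {..<n}. dotp k u (g i) \<noteq> 0} = {}" by auto
    then show ?thesis unfolding cnt_def by (metis card.empty zero_le)
  next
    case False
    have "g ` {i \<in> {..<n}. dotp k (restr u) (g i) \<noteq> 0} \<subseteq> P \<inter> {v \<in> vecs k. dotp k (restr u) v \<noteq> 0}"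
      using g_in_P cols by auto
    then have "card (g ` {i \<in> {..<n}. dotp k (restr u) (g i) \<noteq> 0}) \<le> q ^ (k - 1)"
    proof -
      have "card (P \<inter> {v \<in> vecs k. dotp k (restr u) v \<noteq> 0}) = q ^ (k - 1)"
        unfolding q_def by (rule hyp_count[OF P_reps restr_vecs False]) simp
      moreover have "finite (P \<inter> {v \<in> vecs k. dotp k (restr u) v \<noteq> 0})" using finP by simp
      ultimately show ?thesis using card_mono[OF _ \<open>g ` _ \<subseteq> _\<close>] by simp
    qed
    moreover have "card (g ` {i \<in> {..<n}. dotp k (restr u) (g i) \<noteq> 0}) = cnt (restr u)"
      unfolding cnt_def by (rule card_image) (rule inj_on_subset[OF ginj], auto)
    ultimately show ?thesis using cnt_restr[of u] by simp
  qed
  have qk: "q ^ (k - 1) < q ^ (K - 1)" using q2 kK k_pos by (simp add: power_strict_increasing)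
  define C where "C = gen_code k {..<n} g"
  define Cw where "Cw u = (\<lambda>i. if i \<in> {..<n} then dotp k u (g i) else 0)" for u :: "nat \<Rightarrow> 'a"
  have C_eq: "C = Cw ` vecs k" unfolding C_def gen_code_def Cw_def by auto
  have wtCw: "wt (Cw u) = cnt u" for u
  proof -
    have "supp (Cw u) = {i \<in> {..<n}. dotp k u (g i) \<noteq> 0}" by (auto simp: supp_def Cw_def)
    then show ?thesis by (simp add: wt_def cnt_def)
  qed
  define WC where "WC = {wt c | c. c \<in> C \<and> c \<noteq> 0}"
  have finWC: "finite WC"
  proof (rule finite_subset[of _ "{..n}"])
    show "WC \<subseteq> {..n}"
    proof
      fix x assume "x \<in> WC"
      then obtain u where "x = cnt u" unfolding WC_def C_eq using wtCw by auto
      moreover have "cnt u \<le> n" unfolding cnt_def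
        using card_mono[of "{..<n}" "{i \<in> {..<n}. dotp k u (g i) \<noteq> 0}"] by auto
      ultimately show "x \<in> {..n}" by simp
    qed
  qed simp
  have WCne: "WC \<noteq> {}"
  proof
    assume "WC = {}"
    then have "C \<subseteq> {0}" unfolding WC_def by auto
    moreover have "Cw 0 = 0" by (simp add: Cw_def dotp_def fun_eq_iff)
    moreover have "Cw 0 \<in> Cw ` vecs k" using zero_in_vecs by blast
    ultimately have C0: "C = {0}" unfolding C_eq by auto
    interpret V: vector_space "\<lambda>(c::'a) (f::nat\<Rightarrow>'a). \<lambda>j. c * f j" by (rule VS)
    have "V.dim C = 0" by (rule V.dim_unique[of "{}"]) (auto simp: C0 V.span_empty V.independent_empty)
    then show False using dimC k_pos unfolding C_def code_dim_def by simp
  qed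
  have wMax: "w = Max WC" unfolding w_def max_weight_def WC_def C_def ..
  have w_in: "w \<in> WC" using wMax finWC WCne by simp
  have w_ge: "x \<le> w" if "x \<in> WC" for x using wMax finWC that by simp
  have cnt_w: "cnt u \<le> w" for u
  proof (cases "Cw (restr u) = 0")
    case True
    then show ?thesis using wtCw[of "restr u"] cnt_restr[of u] by (simp add: wt_def supp_def)
  next
    case False
    then have inWC: "wt (Cw (restr u)) \<in> WC" unfolding WC_def C_eq using restr_vecs by blast
    show ?thesis using w_ge[OF inWC] wtCw[of "restr u"] cnt_restr[of u] by simp
  qed
  obtain u0 where u0: "u0 \<in> vecs k" "Cw u0 \<noteq> 0" "cnt u0 = w"
    using w_in unfolding WC_def C_eq using wtCw by auto
  have w_bound: "w \<le> q ^ (k - 1)" using cnt_le[of u0] u0(3) by simp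
  have w_pos: "1 \<le> w"
  proof -
    have "supp (Cw u0) \<noteq> {}" using u0(2) by (auto simp: supp_def fun_eq_iff)
    moreover have "finite (supp (Cw u0))"
      by (rule finite_subset[of _ "{..<n}"]) (auto simp: supp_def Cw_def)
    ultimately have "0 < card (supp (Cw u0))" by (simp add: card_gt_0_iff)
    then show ?thesis using u0(3) wtCw[of u0] by (simp add: wt_def)
  qed
  define N where "N u = (\<lambda>p. if p \<in> P - G then dotp K u (id p) else 0)" for u :: "nat \<Rightarrow> 'a"
  define NC where "NC = gen_code K (P - G) id"
  have NC_eq: "NC = N ` vecs K" unfolding NC_def gen_code_def N_def by auto
  have wtN: "wt (N u) = q ^ (K - 1) - cnt u" if u: "u \<in> vecs K" "u \<noteq> 0" for u
  proof -
    define S1 where "S1 = P \<inter> {v \<in> vecs K. dotp K u v \<noteq> 0}"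
    define S2 where "S2 = g ` {i \<in> {..<n}. dotp K u (g i) \<noteq> 0}"
    have "supp (N u) = S1 - S2"
      using PV cols ginj unfolding S1_def S2_def N_def supp_def G_def by auto
    moreover have "S2 \<subseteq> S1" unfolding S1_def S2_def using g_in_P PV by auto
    moreover have "finite S1" unfolding S1_def using finP by simp
    moreover have "card S1 = q ^ (K - 1)" unfolding S1_def q_def
      by (rule hyp_count[OF P_reps[folded K_def] u]) simp
    moreover have "card S2 = cnt u"
    proof -
      have "card S2 = card {i \<in> {..<n}. dotp K u (g i) \<noteq> 0}"
        unfolding S2_def by (rule card_image) (rule inj_on_subset[OF ginj], auto)
      also have "{i \<in> {..<n}. dotp K u (g i) \<noteq> 0} = {i \<in> {..<n}. dotp k u (g i) \<noteq> 0}"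
        using cols kK dotp_vecs_le[of _ k K u] by auto
      finally show ?thesis by (simp add: cnt_def)
    qed
    ultimately show ?thesis by (simp add: wt_def card_Diff_subset finite_subset)
  qed
  have N0: "N 0 = 0" by (simp add: N_def dotp_def fun_eq_iff)
  have Nnz: "N u \<noteq> 0" if "u \<in> vecs K" "u \<noteq> 0" for u
  proof
    assume "N u = 0"
    then have "wt (N u) = 0" by (simp add: wt_def supp_def)
    moreover have "cnt u < q ^ (K - 1)" using cnt_le[of u] qk by linarith
    ultimately show False using wtN[OF that] by simp
  qed
  have part2: "code_dim NC = K"
    unfolding NC_def by (rule gen_dim) (use Nnz in \<open>auto simp: N_def\<close>)
  define WN where "WN = {wt c | c. c \<in> NC \<and> c \<noteq> 0}"
  have WN_bounds: "q ^ (K - 1) - w \<le> x \<and> x \<le> q ^ (K - 1)" if xW: "x \<in> WN" for x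
  proof -
    obtain u where "u \<in> vecs K" "N u \<noteq> 0" "x = wt (N u)"
      using xW unfolding WN_def NC_eq by auto
    moreover then have "u \<noteq> 0" using N0 by auto
    ultimately have "x = q ^ (K - 1) - cnt u" using wtN by simp
    then show ?thesis using cnt_w[of u] by simp
  qed
  have finWN: "finite WN" by (rule finite_subset[of _ "{..q ^ (K - 1)}"]) (use WN_bounds in auto)
  have u0K: "u0 \<in> vecs K" using u0(1) vecs_mono[of k K] kK by auto
  have u0nz: "u0 \<noteq> 0"
  proof
    assume "u0 = 0"
    then have "Cw u0 = 0" unfolding \<open>u0 = 0\<close> by (simp add: Cw_def dotp_def fun_eq_iff)
    then show False using u0(2) by simp
  qed
  have minW: "q ^ (K - 1) - w \<in> WN"
  proof -
    have "N u0 \<in> N ` vecs K" using u0K by blast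
    then show ?thesis using wtN[OF u0K u0nz] Nnz[OF u0K u0nz] u0(3) unfolding WN_def NC_eq by force
  qed
  have EK: "E k \<in> vecs K" "E k \<noteq> (0 :: nat \<Rightarrow> 'a)" using E_vecs[OF kK]
    by (auto simp: E_def fun_eq_iff)
  have cntE: "cnt (E k) = 0"
  proof -
    have "dotp k (E k) v = (0::'a)" for v unfolding dotp_def E_def by simp
    then show ?thesis by (simp add: cnt_def)
  qed
  have maxW: "q ^ (K - 1) \<in> WN"
  proof -
    have "N (E k) \<in> N ` vecs K" using EK by blast
    then show ?thesis using wtN[OF EK] Nnz[OF EK] cntE unfolding WN_def NC_eq by force
  qed
  have minNC: "min_weight NC = q ^ (K - 1) - w"
    unfolding min_weight_def WN_def[symmetric] by (rule Min_eqI[OF finWN]) (use WN_bounds minW in auto)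
  have maxNC: "max_weight NC = q ^ (K - 1)"
    unfolding max_weight_def WN_def[symmetric] by (rule Max_eqI[OF finWN]) (use WN_bounds maxW in auto)
  have part5: "minimal_code NC \<and> real (min_weight NC) / real (max_weight NC) > (real q - 1) / real q"
    if hyp: "real h > log (real q) (real w) - real k + 2"
  proof -
    have K2: "2 \<le> K" using k_pos h_pos by (simp add: K_def)
    have "log (real q) (real w) < real (K - 2)" using hyp K2 by (simp add: K_def of_nat_diff)
    then have "real w < real q powr real (K - 2)" using q2 w_pos by (simp add: log_less_iff)
    then have "real w < real q ^ (K - 2)" using q2 by (simp add: powr_realpow)
    then have wQ: "w < q ^ (K - 2)" by (simp add: of_nat_less_iff[symmetric])
    define Q where "Q = q ^ (K - 2)"
    have "K - 1 = Suc (K - 2)" using K2 by simp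
    then have XQ: "q ^ (K - 1) = q * Q" unfolding Q_def by simp
    have a1: "q * (q * Q - w) = q * (q * Q) - q * w" by (simp add: diff_mult_distrib2)
    have a2: "(q - 1) * (q * Q) = q * (q * Q) - q * Q" by (simp add: diff_mult_distrib)
    have a3: "q * w < q * Q" using wQ q2 by (simp add: Q_def)
    have a4: "q * Q \<le> q * (q * Q)" using q2 by simp
    have ineq: "(q - 1) * (q * Q) < q * (q * Q - w)" using a1 a2 a3 a4 by linarith
    have minimal: "minimal_code NC"
    proof (rule minimal_from_bounds[where J = "P - G" and m = "q * Q - w" and M = "q * Q"])
      show "finite (P - G)" using finP by simp
      show "\<forall>c\<in>NC. \<forall>j. j \<notin> P - G \<longrightarrow> c j = 0" unfolding NC_eq N_def by auto
      show "\<forall>c\<in>NC. \<forall>c'\<in>NC. \<forall>a. (\<lambda>j. c j - a * c' j) \<in> NC"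
      proof (intro ballI allI)
        fix c c' a assume "c \<in> NC" "c' \<in> NC"
        then obtain u u' where uu: "u \<in> vecs K" "u' \<in> vecs K" "c = N u" "c' = N u'"
          unfolding NC_eq by auto
        have "(\<lambda>j. c j - a * c' j) = N (\<lambda>l. u l - a * u' l)"
          unfolding uu N_def dotp_def
          by (auto simp: fun_eq_iff sum_subtractf sum_distrib_left algebra_simps)
        moreover have "(\<lambda>l. u l - a * u' l) \<in> vecs K" using uu by (auto simp: vecs_def)
        ultimately show "(\<lambda>j. c j - a * c' j) \<in> NC" unfolding NC_eq by blast
      qed
      show "\<forall>c\<in>NC. c \<noteq> 0 \<longrightarrow> q * Q - w \<le> wt c \<and> wt c \<le> q * Q"
        using WN_bounds XQ unfolding WN_def by auto
      show "(CARD('a) - 1) * (q * Q) < CARD('a) * (q * Q - w)" using ineq by (simp add: q_def)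
    qed
    have "real ((q - 1) * (q * Q)) < real (q * (q * Q - w))" using ineq by (simp only: of_nat_less_iff)
    then have "(real q - 1) * real (q * Q) < real q * real (q * Q - w)"
      using q2 by (simp add: of_nat_diff)
    moreover have "real (q * Q) > 0" using q2 by (simp add: Q_def)
    ultimately have "(real q - 1) / real q < real (q * Q - w) / real (q * Q)"
      using q2 by (simp add: divide_simps mult.commute)
    then show ?thesis using minimal minNC maxNC XQ by simp
  qed
  show ?thesis
    using part1 part2 minNC maxNC part5
    unfolding q_def K_def G_def NC_def C_def by simp
qed

end
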